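(* Let $h_y$ be a function realized by a convolutional arithmetic circuit, with corresponding coefficient tensor $\mathcal{A}^y$, i.e. $h_y(\mathbf{x}_1,\ldots,\mathbf{x}_N)=\sum_{d_1\ldots d_N=1}^{M}\mathcal{A}^y_{d_1\ldots d_N}\prod_{i=1}^{N}f_{\theta_{d_i}}(\mathbf{x}_i)$. Assume that the network's representation functions $f_{\theta_1},\ldots,f_{\theta_M}$ are linearly independent, and that they, as well as the functions $g_\nu,g'_\nu$ appearing in the definition of separation rank, are measurable and square-integrable. Then, for any partition $(I,J)$ of $[N]$, it holds that $sep(h_y;I,J)=rank\,\llbracket\mathcal{A}^y\rrbracket_{I,J}$.
   Context: A convolutional arithmetic circuit takes as input $X=(\mathbf{x}_1,\ldots,\mathbf{x}_N)\in(\mathbb{R}^s)^N$ (e.g. $N$ image patches of dimension $s$). Its first (representation) layer applies $M$ representation functions $f_{\theta_1},\ldots,f_{\theta_M}:\mathbb{R}^s\to\mathbb{R}$ to every patch; it is followed by hidden layers each consisting of a $1\times1$ convolution (linear weights, linear activation) and product pooling over non-overlapping windows, and a final dense linear output layer. Every output $y$ realizes a function of the form $h_y(\mathbf{x}_1,\ldots,\mathbf{x}_N)=\sum_{d_1\ldots d_N=1}^{M}\mathcal{A}^y_{d_1\ldots d_N}\prod_{i=1}^{N}f_{\theta_{d_i}}(\mathbf{x}_i)$, where the coefficient tensor $\mathcal{A}^y$ is of order $N$ with dimension $M$ in each mode, and its entries are polynomials in the network's linear weights. For a partition $(I,J)$ of $[N]=\{1,\ldots,N\}$ with $I=\{i_1<\cdots<i_{|I|}\}$,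 $J=\{j_1<\cdots<j_{|J|}\}$, the separation rank of $h:(\mathbb{R}^s)^N\to\mathbb{R}$ w.r.t. $(I,J)$ is $sep(h;I,J):=\min\{R\in\mathbb{N}\cup\{0\}:\exists\, g_1\ldots g_R:(\mathbb{R}^s)^{|I|}\to\mathbb{R},\ g'_1\ldots g'_R:(\mathbb{R}^s)^{|J|}\to\mathbb{R}\text{ s.t. } h(\mathbf{x}_1,\ldots,\mathbf{x}_N)=\sum_{\nu=1}^{R}g_\nu(\mathbf{x}_{i_1},\ldots,\mathbf{x}_{i_{|I|}})\,g'_\nu(\mathbf{x}_{j_1},\ldots,\mathbf{x}_{j_{|J|}})\}$ (if $I$ or $J$ is empty it is $1$, or $0$ if $h\equiv0$). The matricization $\llbracket\mathcal{A}\rrbracket_{I,J}$ of an order-$N$ tensor $\mathcal{A}$ with mode dimensions $M_1,\ldots,M_N$ w.r.t. $(I,J)$ is the $\prod_{t}M_{i_t}$-by-$\prod_{t}M_{j_t}$ matrix holding $\mathcal{A}_{d_1\ldots d_N}$ in row index $1+\sum_{t=1}^{|I|}(d_{i_t}-1)\prod_{t'=t+1}^{|I|}M_{i_{t'}}$ and column index $1+\sum_{t=1}^{|J|}(d_{j_t}-1)\prod_{t'=t+1}^{|J|}M_{j_{t'}}$. *)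

theory Defs
  imports "HOL-Analysis.Analysis" "Jordan_Normal_Form.DL_Rank"
begin

text \<open>Conventions: modes are indexed 0..N-1 and mode values 0..M-1 (0-based
version of the paper's 1-based indexing).  A patch lives in a Euclidean space
'a (standing for R^s).  An input X = (x_0,...,x_{N-1}) is a map nat => 'a
(values outside {..<N} are irrelevant).  A coefficient tensor of order N with
dimension M in each mode is a function on index tuples d in {..<N} ->E {..<M}.\<close>

definition conv_func ::
  "nat \<Rightarrow> nat \<Rightarrow> (nat \<Rightarrow> 'a \<Rightarrow> real) \<Rightarrow> ((nat \<Rightarrow> nat) \<Rightarrow> real) \<Rightarrow> (nat \<Rightarrow> 'a) \<Rightarrow> real"
  where "conv_func N M f A X =
     (\<Sum>d \<in> {..<N} \<rightarrow>\<^sub>E {..<M}. A d * (\<Prod>i<N. f (d i) (X i)))"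

definition sq_int_on :: "nat set \<Rightarrow> ((nat \<Rightarrow> 'a::euclidean_space) \<Rightarrow> real) \<Rightarrow> bool"
  where "sq_int_on K g \<longleftrightarrow>
     g \<in> borel_measurable (PiM K (\<lambda>_. lborel)) \<and>
     integrable (PiM K (\<lambda>_. lborel)) (\<lambda>x. (g x)\<^sup>2)"

definition sep_rank ::
  "((nat \<Rightarrow> 'a::euclidean_space) \<Rightarrow> real) \<Rightarrow> nat set \<Rightarrow> nat set \<Rightarrow> nat"
  where "sep_rank h I J =
    (if I = {} \<or> J = {} then (if (\<forall>X. h X = 0) then 0 else 1)
     else (LEAST R. \<exists>g g' :: nat \<Rightarrow> (nat \<Rightarrow> 'a) \<Rightarrow> real.
              (\<forall>\<nu><R. sq_int_on I (g \<nu>) \<and> sq_int_on J (g' \<nu>)) \<and>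
              (\<forall>X. h X = (\<Sum>\<nu><R. g \<nu> (restrict X I) * g' \<nu> (restrict X J)))))"

definition pos_in :: "nat set \<Rightarrow> nat \<Rightarrow> nat"
  where "pos_in K k = card {i \<in> K. i < k}"

text \<open>The paper's index formula
1 + sum_t (d_{i_t}-1) M^(|I|-t) is, 0-based, r = sum_t d_{i_t} M^(L-1-t); this
recovers d_{i_t} from r.\<close>
definition digit :: "nat \<Rightarrow> nat \<Rightarrow> nat \<Rightarrow> nat \<Rightarrow> nat"
  where "digit M L r t = (r div M ^ (L - 1 - t)) mod M"

definition matricize ::
  "nat \<Rightarrow> nat \<Rightarrow> ((nat \<Rightarrow> nat) \<Rightarrow> real) \<Rightarrow> nat set \<Rightarrow> nat set \<Rightarrow> real mat"
  where "matricize N M A I J =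
    mat (M ^ card I) (M ^ card J)
      (\<lambda>(r, c). A (\<lambda>k. if k < N then
                          (if k \<in> I then digit M (card I) r (pos_in I k)
                           else digit M (card J) c (pos_in J k))
                        else undefined))"

definition mat_rank :: "real mat \<Rightarrow> nat"
  where "mat_rank B = vec_space.rank (dim_row B) B"

end

theory Submission
  imports Defs
begin



lemma rank_le_sum:
  fixes B :: "real mat"
  assumes B: "B \<in> carrier_mat n nc"
    and ent: "\<And>i j. i < n \<Longrightarrow> j < nc \<Longrightarrow> B $$ (i,j) = (\<Sum>\<nu><R. u \<nu> i * v \<nu> j)"
  shows "vec_space.rank n B \<le> R"
  using B ent
proof (induction R arbitrary: B)
  case 0
  then have "B = 0\<^sub>m n nc" by (intro eq_matI) auto
  then show ?case using vec_space.rank_0I by simp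
next
  case (Suc R)
  define B1 where "B1 = mat n nc (\<lambda>(i,j). \<Sum>\<nu><R. u \<nu> i * v \<nu> j)"
  define B2 where "B2 = mat n nc (\<lambda>(i,j). u R i * v R j)"
  have "B = B1 + B2" using Suc.prems by (intro eq_matI) (auto simp: B1_def B2_def)
  moreover have "vec_space.rank n B1 \<le> R" by (rule Suc.IH) (auto simp: B1_def)
  moreover have "vec_space.rank n B2 \<le> 1"
    by (rule vec_space.rank_le_1_product_entries[of B2 n nc "u R" "v R"]) (auto simp: B2_def)
  moreover have "vec_space.rank n (B1 + B2) \<le> vec_space.rank n B1 + vec_space.rank n B2"
    by (rule vec_space.rank_subadditive) (auto simp: B1_def B2_def)
  ultimately show ?case by simp
qed



lemma rank_decomp:
  fixes B :: "real mat"
  assumes B: "B \<in> carrier_mat n nc"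
  shows "\<exists>u v. \<forall>i<n. \<forall>j<nc. B $$ (i,j) = (\<Sum>\<nu><vec_space.rank n B. u \<nu> i * v \<nu> j)"
proof -
  interpret V: vec_space "TYPE(real)" n .
  obtain S where S: "maximal S (\<lambda>T. T \<subseteq> set (cols B) \<and> V.lin_indpt T)"
    using maximal_exists[of "(\<lambda>T. T \<subseteq> set (cols B) \<and> V.lin_indpt T)" "card (set (cols B))" "{}"]
    by (meson List.finite_set card_mono empty_iff empty_subsetI V.finite_lin_indpt2 rev_finite_subset)
  have rk: "V.rank B = card S" by (rule V.rank_card_indpt[OF B S])
  have Ssub: "S \<subseteq> set (cols B)" and Sli: "V.lin_indpt S" using S by (auto simp: maximal_def)
  have fin: "finite S" using Ssub finite_subset by blast
  have colsC: "set (cols B) \<subseteq> carrier_vec n" using B cols_dim by blast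
  have SC: "S \<subseteq> carrier_vec n" using Ssub colsC by blast
  have inspan: "col B j \<in> V.span S" if j: "j < nc" for j
  proof (cases "col B j \<in> S")
    case True then show ?thesis using V.in_own_span SC by auto
  next
    case False
    have cj: "col B j \<in> set (cols B)" using j B by (simp add: cols_def)
    show ?thesis
    proof (rule ccontr)
      assume "col B j \<notin> V.span S"
      then have "V.lin_indpt (S \<union> {col B j})"
        using V.lin_dep_iff_in_span[OF SC Sli _ False] cj colsC by auto
      then have "S \<union> {col B j} = S" using S cj Ssub unfolding maximal_def by blast
      then show False using False by blast
    qed
  qed
  have "\<forall>j. \<exists>a. j < nc \<longrightarrow> V.lincomb a S = col B j"
    using V.finite_in_span[OF fin] SC inspan by (metis V.carrier_vs_is_self)
  then obtain a where a: "\<And>j. j < nc \<Longrightarrow> V.lincomb (a j) S = col B j" by metis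
  obtain e where e: "bij_betw e {..<card S} S"
    using fin ex_bij_betw_nat_finite lessThan_atLeast0 by metis
  show ?thesis
  proof (intro exI allI impI)
    fix i j assume i: "i < n" and j: "j < nc"
    have "B $$ (i,j) = col B j $ i" using i j B by auto
    also have "\<dots> = (\<Sum>x\<in>S. a j x * x $ i)" using V.lincomb_index[OF i SC, of "a j"] a[OF j] by simp
    also have "\<dots> = (\<Sum>\<nu><card S. a j (e \<nu>) * e \<nu> $ i)"
      using sum.reindex_bij_betw[OF e, of "\<lambda>x. a j x * x $ i"] by simp
    finally show "B $$ (i,j) = (\<Sum>\<nu><V.rank B. (\<lambda>\<nu> i. e \<nu> $ i) \<nu> i * (\<lambda>\<nu> j. a j (e \<nu>)) \<nu> j)"
      by (simp add: rk mult.commute)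
  qed
qed



definition evf :: "(('b \<Rightarrow> real) \<Rightarrow> real) \<Rightarrow> bool"
  where "evf L \<longleftrightarrow> (\<exists>S w. finite S \<and> (\<forall>g. L g = (\<Sum>x\<in>S. w x * g x)))"

lemma sum_ext_zero:
  assumes "finite T" "S \<subseteq> T"
  shows "(\<Sum>x\<in>T. (if x \<in> S then w x else 0) * g x) = (\<Sum>x\<in>S. w x * (g x::real))"
proof -
  have "(\<Sum>x\<in>T. (if x \<in> S then w x else 0) * g x) = (\<Sum>x\<in>T. if x \<in> S then w x * g x else 0)"
    by (intro sum.cong) auto
  also have "\<dots> = (\<Sum>x\<in>S. w x * g x)"
    using assms by (simp add: sum.If_cases Int_absorb1 Int_absorb2 inf_commute)
  finally show ?thesis .
qed

lemma evf_point: "evf (\<lambda>g. g q)"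
  unfolding evf_def by (rule exI[of _ "{q}"], rule exI[of _ "\<lambda>_. 1"]) simp

lemma evf_zero: "evf (\<lambda>g. 0)"
  unfolding evf_def by (rule exI[of _ "{}"]) simp

lemma evf_lin:
  assumes "evf L1" "evf L2"
  shows "evf (\<lambda>g. a * L1 g + b * L2 g)"
proof -
  obtain S1 w1 where 1: "finite S1" "\<And>g. L1 g = (\<Sum>x\<in>S1. w1 x * g x)" using assms(1) evf_def by metis
  obtain S2 w2 where 2: "finite S2" "\<And>g. L2 g = (\<Sum>x\<in>S2. w2 x * g x)" using assms(2) evf_def by metis
  define w where "w x = a * (if x \<in> S1 then w1 x else 0) + b * (if x \<in> S2 then w2 x else 0)" for x
  have "a * L1 g + b * L2 g = (\<Sum>x\<in>S1 \<union> S2. w x * g x)" for g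
  proof -
    have "(\<Sum>x\<in>S1 \<union> S2. w x * g x) = a * (\<Sum>x\<in>S1 \<union> S2. (if x \<in> S1 then w1 x else 0) * g x)
        + b * (\<Sum>x\<in>S1 \<union> S2. (if x \<in> S2 then w2 x else 0) * g x)"
      by (simp add: w_def sum.distrib sum_distrib_left algebra_simps)
    also have "\<dots> = a * L1 g + b * L2 g"
      using 1 2 by (simp add: sum_ext_zero)
    finally show ?thesis by simp
  qed
  then show ?thesis unfolding evf_def using 1 2 by blast
qed

lemma evf_sum:
  fixes K :: nat
  assumes "\<And>j. j < K \<Longrightarrow> evf (L j)"
  shows "evf (\<lambda>g. \<Sum>j<K. c j * L j g)"
  using assms
proof (induction K)
  case 0 then show ?case by (simp add: evf_zero)
next
  case (Suc K)
  have "evf (\<lambda>g. 1 * (\<Sum>j<K. c j * L j g) + c K * L K g)"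
    by (rule evf_lin) (use Suc in auto)
  then show ?case by simp
qed

lemma evf_linear:
  assumes "evf L"
  shows "L (\<lambda>x. \<Sum>m<K. c m * F m x) = (\<Sum>m<K. c m * L (F m))"
proof -
  obtain S w where "finite S" "\<And>g. L g = (\<Sum>x\<in>S. w x * g x)" using assms evf_def by metis
  then show ?thesis
    by (simp add: sum_distrib_left sum.swap[of _ S] algebra_simps)
qed

lemma dual_funs:
  fixes f :: "nat \<Rightarrow> 'b \<Rightarrow> real"
  assumes "\<And>c. (\<forall>x. (\<Sum>m<M. c m * f m x) = 0) \<Longrightarrow> (\<forall>m<M. c m = 0)"
  shows "\<forall>j<M. \<exists>L. evf L \<and> (\<forall>m<M. L (f m) = (if m = j then 1 else 0))"
  using assms
proof (induction M)
  case 0 then show ?case by simp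
next
  case (Suc M)
  have li: "\<forall>m<M. c m = 0" if h: "\<forall>x. (\<Sum>m<M. c m * f m x) = 0" for c
  proof -
    define c' where "c' m = (if m < M then c m else 0)" for m
    have "\<forall>x. (\<Sum>m<Suc M. c' m * f m x) = 0" using h by (simp add: c'_def)
    then have "\<forall>m<Suc M. c' m = 0" using Suc.prems by blast
    then show ?thesis unfolding c'_def by (metis less_SucI)
  qed
  from Suc.IH[OF li] obtain Ls where Ls: "\<And>j. j < M \<Longrightarrow> evf (Ls j) \<and> (\<forall>m<M. Ls j (f m) = (if m = j then 1 else 0))"
    by metis
  define a where "a j = Ls j (f M)" for j
  define u where "u x = f M x - (\<Sum>j<M. a j * f j x)" for x
  have "\<exists>q. u q \<noteq> 0"
  proof (rule ccontr)
    assume "\<not> ?thesis"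
    then have u0: "\<And>x. u x = 0" by blast
    define c where "c m = (if m = M then 1 else - a m)" for m
    have "\<forall>x. (\<Sum>m<Suc M. c m * f m x) = 0" using u0 by (simp add: c_def u_def sum_negf)
    then have "c M = 0" using Suc.prems by blast
    then show False by (simp add: c_def)
  qed
  then obtain q where q: "u q \<noteq> 0" by blast
  define \<psi> where "\<psi> g = (1 / u q) * g q + (- 1 / u q) * (\<Sum>j<M. f j q * Ls j g)" for g
  have evpsi: "evf \<psi>"
    unfolding \<psi>_def by (rule evf_lin[OF evf_point evf_sum]) (use Ls in auto)
  have psi_lt: "\<psi> (f i) = 0" if i: "i < M" for i
  proof -
    have "(\<Sum>j<M. f j q * Ls j (f i)) = (\<Sum>j<M. if j = i then f i q else 0)"
      by (intro sum.cong) (auto simp: Ls i)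
    also have "\<dots> = f i q" using i by simp
    finally show ?thesis by (simp add: \<psi>_def)
  qed
  have psi_M: "\<psi> (f M) = 1"
  proof -
    have e: "(\<Sum>j<M. f j q * Ls j (f M)) = (\<Sum>j<M. a j * f j q)" by (simp add: a_def mult.commute)
    have "\<psi> (f M) = (f M q - (\<Sum>j<M. a j * f j q)) / u q"
      unfolding \<psi>_def e by (simp add: diff_divide_distrib)
    also have "\<dots> = 1" using q by (simp add: u_def)
    finally show ?thesis .
  qed
  show ?case
  proof (intro allI impI)
    fix j assume j: "j < Suc M"
    show "\<exists>L. evf L \<and> (\<forall>m<Suc M. L (f m) = (if m = j then 1 else 0))"
    proof (cases "j = M")
      case True
      then show ?thesis using evpsi psi_lt psi_M by (intro exI[of _ \<psi>]) (auto simp: less_Suc_eq)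
    next
      case False
      then have jM: "j < M" using j by simp
      define L where "L g = 1 * Ls j g + (- a j) * \<psi> g" for g
      have "evf L" unfolding L_def by (rule evf_lin) (use Ls jM evpsi in auto)
      moreover have "\<forall>m<Suc M. L (f m) = (if m = j then 1 else 0)"
        using Ls[OF jM] psi_lt psi_M jM by (auto simp: L_def less_Suc_eq a_def)
      ultimately show ?thesis by blast
    qed
  qed
qed



lemma pos_in_bij:
  assumes "finite K"
  shows "bij_betw (pos_in K) K {..<card K}"
proof -
  have inj: "inj_on (pos_in K) K"
  proof (rule inj_onI)
    fix x y assume x: "x \<in> K" and y: "y \<in> K" and e: "pos_in K x = pos_in K y"
    show "x = y"
    proof (rule ccontr)
      assume "x \<noteq> y"
      then consider "x < y" | "y < x" by linarith
      then show False
      proof cases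
        case 1
        have "{i \<in> K. i < x} \<subset> {i \<in> K. i < y}" using 1 x by auto
        then have "card {i \<in> K. i < x} < card {i \<in> K. i < y}"
          using assms by (intro psubset_card_mono) auto
        then show False using e by (simp add: pos_in_def)
      next
        case 2
        have "{i \<in> K. i < y} \<subset> {i \<in> K. i < x}" using 2 y by auto
        then have "card {i \<in> K. i < y} < card {i \<in> K. i < x}"
          using assms by (intro psubset_card_mono) auto
        then show False using e by (simp add: pos_in_def)
      qed
    qed
  qed
  have sub: "pos_in K ` K \<subseteq> {..<card K}"
  proof
    fix y assume "y \<in> pos_in K ` K"
    then obtain x where x: "x \<in> K" "y = pos_in K x" by blast
    have "{i \<in> K. i < x} \<subset> K" using x by auto
    then have "card {i \<in> K. i < x} < card K" using assms by (intro psubset_card_mono) auto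
    then show "y \<in> {..<card K}" using x by (simp add: pos_in_def)
  qed
  have "card (pos_in K ` K) = card {..<card K}" using inj by (simp add: card_image)
  then have "pos_in K ` K = {..<card K}" using sub by (intro card_subset_eq) auto
  then show ?thesis using inj by (simp add: bij_betw_def)
qed

lemma digits_inj_aux:
  fixes M :: nat
  shows "r < M^L \<Longrightarrow> r' < M^L \<Longrightarrow> (\<forall>s<L. (r div M^s) mod M = (r' div M^s) mod M) \<Longrightarrow> r = r'"
proof (induction L arbitrary: r r')
  case 0 then show ?case by simp
next
  case (Suc L)
  have Mpos: "M > 0" using Suc.prems(1) by (cases M) auto
  have a: "r div M < M^L" "r' div M < M^L" using Suc.prems(1,2)
    by (simp_all add: less_mult_imp_div_less mult.commute)
  have "\<forall>s<L. (r div M div M^s) mod M = (r' div M div M^s) mod M"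
  proof (intro allI impI)
    fix s assume "s < L"
    then have "(r div M^(Suc s)) mod M = (r' div M^(Suc s)) mod M" using Suc.prems(3) by auto
    then show "(r div M div M^s) mod M = (r' div M div M^s) mod M" by (simp add: div_mult2_eq)
  qed
  then have d: "r div M = r' div M" using Suc.IH[OF a] by blast
  have m: "r mod M = r' mod M" using Suc.prems(3)[rule_format, of 0] by simp
  show ?case using d m by (metis div_mult_mod_eq)
qed

lemma digits_inj:
  assumes "r < M^L" "r' < M^L" "\<And>t. t < L \<Longrightarrow> digit M L r t = digit M L r' t"
  shows "r = r'"
proof (rule digits_inj_aux[OF assms(1,2)], intro allI impI)
  fix s assume s: "s < L"
  have "L - 1 - (L - 1 - s) = s" using s by simp
  then show "(r div M^s) mod M = (r' div M^s) mod M"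
    using assms(3)[of "L - 1 - s"] s by (simp add: digit_def)
qed

definition DD :: "nat \<Rightarrow> nat \<Rightarrow> nat set \<Rightarrow> nat set \<Rightarrow> nat \<Rightarrow> nat \<Rightarrow> nat \<Rightarrow> nat" where
  "DD N M I J r c = (\<lambda>k. if k < N then
                          (if k \<in> I then digit M (card I) r (pos_in I k)
                           else digit M (card J) c (pos_in J k))
                        else undefined)"

lemma matricize_DD: "matricize N M A I J = mat (M ^ card I) (M ^ card J) (\<lambda>(r, c). A (DD N M I J r c))"
  unfolding matricize_def DD_def by simp

lemma DD_PiE:
  assumes part: "I \<union> J = {..<N}" "I \<inter> J = {}" and r: "r < M ^ card I" and c: "c < M ^ card J"
  shows "DD N M I J r c \<in> {..<N} \<rightarrow>\<^sub>E {..<M}"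
proof -
  have fin: "finite I" "finite J" using part by (metis finite_Un finite_lessThan)+
  have "DD N M I J r c k < M" if k: "k < N" for k
  proof (cases "k \<in> I")
    case True
    then have "card I > 0" using fin by (auto simp: card_gt_0_iff)
    then have "M > 0" using r by (metis gr0I less_nat_zero_code zero_power)
    then show ?thesis using k True by (simp add: DD_def digit_def)
  next
    case False
    then have "k \<in> J" using part k by auto
    then have "card J > 0" using fin by (auto simp: card_gt_0_iff)
    then have "M > 0" using c by (metis gr0I less_nat_zero_code zero_power)
    then show ?thesis using k False by (simp add: DD_def digit_def)
  qed
  then show ?thesis by (auto simp: DD_def PiE_iff extensional_def)
qed

lemma DD_bij:
  assumes part: "I \<union> J = {..<N}" "I \<inter> J = {}"
  shows "bij_betw (\<lambda>(r,c). DD N M I J r c) ({..<M ^ card I} \<times> {..<M ^ card J}) ({..<N} \<rightarrow>\<^sub>E {..<M})"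
proof -
  have fin: "finite I" "finite J" using part by (metis finite_Un finite_lessThan)+
  have IN: "\<And>k. k \<in> I \<Longrightarrow> k < N" "\<And>k. k \<in> J \<Longrightarrow> k < N" using part by auto
  have inj: "inj_on (\<lambda>(r,c). DD N M I J r c) ({..<M ^ card I} \<times> {..<M ^ card J})"
  proof (rule inj_onI, clarify)
    fix r c r' c'
    assume r: "r < M ^ card I" "r' < M ^ card I" and c: "c < M ^ card J" "c' < M ^ card J"
      and e: "DD N M I J r c = DD N M I J r' c'"
    have "r = r'"
    proof (rule digits_inj[OF r])
      fix t assume "t < card I"
      then obtain k where k: "k \<in> I" "pos_in I k = t" using pos_in_bij[OF fin(1)]
        by (metis bij_betw_iff_bijections lessThan_iff)
      show "digit M (card I) r t = digit M (card I) r' t"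
        using fun_cong[OF e, of k] k IN by (simp add: DD_def)
    qed
    moreover have "c = c'"
    proof (rule digits_inj[OF c])
      fix t assume "t < card J"
      then obtain k where k: "k \<in> J" "pos_in J k = t" using pos_in_bij[OF fin(2)]
        by (metis bij_betw_iff_bijections lessThan_iff)
      have "k \<notin> I" using k part by auto
      then show "digit M (card J) c t = digit M (card J) c' t"
        using fun_cong[OF e, of k] k IN by (simp add: DD_def)
    qed
    ultimately show "r = r' \<and> c = c'" by simp
  qed
  have sub: "(\<lambda>(r,c). DD N M I J r c) ` ({..<M ^ card I} \<times> {..<M ^ card J}) \<subseteq> {..<N} \<rightarrow>\<^sub>E {..<M}"
    using DD_PiE[OF part] by auto
  have N: "N = card I + card J"
    using part fin by (metis card_Un_disjoint card_lessThan)
  have "card ({..<N} \<rightarrow>\<^sub>E {..<M}) = card ({..<M ^ card I} \<times> {..<M ^ card J})"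
    by (simp add: card_cartesian_product power_add card_PiE N)
  then have "(\<lambda>(r,c). DD N M I J r c) ` ({..<M ^ card I} \<times> {..<M ^ card J}) = {..<N} \<rightarrow>\<^sub>E {..<M}"
    using sub inj by (intro card_subset_eq) (auto simp: card_image finite_PiE)
  then show ?thesis using inj by (simp add: bij_betw_def)
qed



lemma psf_lborel: "product_sigma_finite (\<lambda>_::nat. lborel :: 'a::euclidean_space measure)"
  unfolding product_sigma_finite_def by (simp add: lborel.sigma_finite_measure_axioms)

lemma sq_int_prod:
  fixes f :: "nat \<Rightarrow> 'a::euclidean_space \<Rightarrow> real"
  assumes K: "finite K" and k: "\<And>i. i \<in> K \<Longrightarrow> k i < M"
    and meas: "\<And>m. m < M \<Longrightarrow> f m \<in> borel_measurable lborel"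
    and sqint: "\<And>m. m < M \<Longrightarrow> integrable lborel (\<lambda>x. (f m x)\<^sup>2)"
  shows "sq_int_on K (\<lambda>Y. \<Prod>i\<in>K. f (k i) (Y i))"
  unfolding sq_int_on_def
proof
  show "(\<lambda>Y. \<Prod>i\<in>K. f (k i) (Y i)) \<in> borel_measurable (Pi\<^sub>M K (\<lambda>_. lborel))"
  proof (rule borel_measurable_prod)
    fix i assume i: "i \<in> K"
    show "(\<lambda>Y. f (k i) (Y i)) \<in> borel_measurable (Pi\<^sub>M K (\<lambda>_. lborel))"
      using measurable_compose[OF measurable_component_singleton[OF i] meas[OF k[OF i]]] by simp
  qed
  have "integrable (Pi\<^sub>M K (\<lambda>_. lborel)) (\<lambda>Y. \<Prod>i\<in>K. (f (k i) (Y i))\<^sup>2)"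
    by (rule product_sigma_finite.product_integrable_prod[OF psf_lborel K]) (use sqint k in auto)
  then show "integrable (Pi\<^sub>M K (\<lambda>_. lborel)) (\<lambda>Y. (\<Prod>i\<in>K. f (k i) (Y i))\<^sup>2)"
    by (simp add: prod_power_distrib)
qed

lemma sq_int_lin:
  assumes g: "sq_int_on K g" and h: "sq_int_on K h"
  shows "sq_int_on K (\<lambda>Y. a * g Y + b * h Y)"
  unfolding sq_int_on_def
proof
  have mg: "g \<in> borel_measurable (Pi\<^sub>M K (\<lambda>_. lborel))" and mh: "h \<in> borel_measurable (Pi\<^sub>M K (\<lambda>_. lborel))"
    using g h by (auto simp: sq_int_on_def)
  show m: "(\<lambda>Y. a * g Y + b * h Y) \<in> borel_measurable (Pi\<^sub>M K (\<lambda>_. lborel))"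
    using mg mh by measurable
  have ig: "integrable (Pi\<^sub>M K (\<lambda>_. lborel)) (\<lambda>x. (g x)\<^sup>2)" and ih: "integrable (Pi\<^sub>M K (\<lambda>_. lborel)) (\<lambda>x. (h x)\<^sup>2)"
    using g h by (auto simp: sq_int_on_def)
  have i2: "integrable (Pi\<^sub>M K (\<lambda>_. lborel)) (\<lambda>x. 2 * a\<^sup>2 * (g x)\<^sup>2 + 2 * b\<^sup>2 * (h x)\<^sup>2)"
    using ig ih by simp
  show "integrable (Pi\<^sub>M K (\<lambda>_. lborel)) (\<lambda>x. (a * g x + b * h x)\<^sup>2)"
  proof (rule Bochner_Integration.integrable_bound[OF i2])
    show "(\<lambda>x. (a * g x + b * h x)\<^sup>2) \<in> borel_measurable (Pi\<^sub>M K (\<lambda>_. lborel))"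
      using m by measurable
    show "AE x in Pi\<^sub>M K (\<lambda>_. lborel). norm ((a * g x + b * h x)\<^sup>2) \<le> norm (2 * a\<^sup>2 * (g x)\<^sup>2 + 2 * b\<^sup>2 * (h x)\<^sup>2)"
    proof (rule AE_I2)
      fix x
      have "0 \<le> (a * g x - b * h x)\<^sup>2" by simp
      then have "(a * g x + b * h x)\<^sup>2 \<le> 2 * a\<^sup>2 * (g x)\<^sup>2 + 2 * b\<^sup>2 * (h x)\<^sup>2"
        by (simp add: power2_eq_square algebra_simps)
      then show "norm ((a * g x + b * h x)\<^sup>2) \<le> norm (2 * a\<^sup>2 * (g x)\<^sup>2 + 2 * b\<^sup>2 * (h x)\<^sup>2)"
        by simp
    qed
  qed
qed

lemma sq_int_zero: "sq_int_on K (\<lambda>Y. 0)"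
  unfolding sq_int_on_def by simp

lemma sq_int_sum:
  fixes R :: nat
  assumes "\<And>r. r < R \<Longrightarrow> sq_int_on K (G r)"
  shows "sq_int_on K (\<lambda>Y. \<Sum>r<R. c r * G r Y)"
  using assms
proof (induction R)
  case 0 then show ?case by (simp add: sq_int_zero)
next
  case (Suc R)
  have "sq_int_on K (\<lambda>Y. 1 * (\<Sum>r<R. c r * G r Y) + c R * G R Y)"
    by (rule sq_int_lin) (use Suc in auto)
  then show ?case by simp
qed


lemma dual_common:
  fixes f :: "nat \<Rightarrow> 'b \<Rightarrow> real"
  assumes "\<And>c. (\<forall>x. (\<Sum>m<M. c m * f m x) = 0) \<Longrightarrow> (\<forall>m<M. c m = 0)"
  shows "\<exists>S W. finite S \<and> (\<forall>j<M. \<forall>m<M. (\<Sum>x\<in>S. W j x * f m x) = (if m = j then 1 else 0))"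
proof -
  from dual_funs[OF assms] obtain L where L: "\<And>j. j < M \<Longrightarrow> evf (L j) \<and> (\<forall>m<M. L j (f m) = (if m = j then 1 else 0))"
    by metis
  have "\<forall>j. \<exists>Sw. j < M \<longrightarrow> finite (fst Sw) \<and> (\<forall>g. L j g = (\<Sum>x\<in>fst Sw. snd Sw x * g x))"
    using L unfolding evf_def by fastforce
  then obtain Sw where Sw: "\<And>j. j < M \<Longrightarrow> finite (fst (Sw j)) \<and> (\<forall>g. L j g = (\<Sum>x\<in>fst (Sw j). snd (Sw j) x * g x))"
    by metis
  define S where "S = (\<Union>j<M. fst (Sw j))"
  define W where "W j x = (if x \<in> fst (Sw j) then snd (Sw j) x else 0)" for j x
  have finS: "finite S" using Sw by (auto simp: S_def)
  have "(\<Sum>x\<in>S. W j x * f m x) = (if m = j then 1 else 0)" if j: "j < M" and m: "m < M" for j m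
  proof -
    have "(\<Sum>x\<in>S. W j x * f m x) = (\<Sum>x\<in>fst (Sw j). snd (Sw j) x * f m x)"
      unfolding W_def by (rule sum_ext_zero[OF finS]) (use j in \<open>auto simp: S_def\<close>)
    also have "\<dots> = L j (f m)" using Sw[OF j] by simp
    finally show ?thesis using L[OF j] m by simp
  qed
  then show ?thesis using finS by blast
qed

lemma sum_PiE_split:
  fixes F G :: "(nat \<Rightarrow> 'b) \<Rightarrow> real"
  assumes fin: "finite I" "finite J" "finite S" and disj: "I \<inter> J = {}"
  shows "(\<Sum>X\<in>(I \<union> J) \<rightarrow>\<^sub>E S. F (restrict X I) * G (restrict X J))
       = (\<Sum>Y\<in>I \<rightarrow>\<^sub>E S. F Y) * (\<Sum>Z\<in>J \<rightarrow>\<^sub>E S. G Z)"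
proof -
  have "(\<Sum>Y\<in>I \<rightarrow>\<^sub>E S. F Y) * (\<Sum>Z\<in>J \<rightarrow>\<^sub>E S. G Z) = (\<Sum>YZ\<in>(I \<rightarrow>\<^sub>E S) \<times> (J \<rightarrow>\<^sub>E S). F (fst YZ) * G (snd YZ))"
    by (simp add: sum_product sum.cartesian_product case_prod_beta)
  also have "\<dots> = (\<Sum>X\<in>(I \<union> J) \<rightarrow>\<^sub>E S. F (restrict X I) * G (restrict X J))"
  proof (rule sum.reindex_bij_witness[where i = "\<lambda>X. (restrict X I, restrict X J)"
        and j = "\<lambda>YZ. (\<lambda>k. if k \<in> I then fst YZ k else snd YZ k)"])
    fix X assume X: "X \<in> (I \<union> J) \<rightarrow>\<^sub>E S"
    show "(\<lambda>k. if k \<in> I then fst (restrict X I, restrict X J) k else snd (restrict X I, restrict X J) k) = X"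
    proof
      fix k show "(if k \<in> I then fst (restrict X I, restrict X J) k else snd (restrict X I, restrict X J) k) = X k"
        using X by (auto simp: PiE_iff extensional_def)
    qed
    show "(restrict X I, restrict X J) \<in> (I \<rightarrow>\<^sub>E S) \<times> (J \<rightarrow>\<^sub>E S)" using X by auto
  next
    fix YZ assume YZ: "YZ \<in> (I \<rightarrow>\<^sub>E S) \<times> (J \<rightarrow>\<^sub>E S)"
    obtain Y Z where YZ': "YZ = (Y, Z)" "Y \<in> I \<rightarrow>\<^sub>E S" "Z \<in> J \<rightarrow>\<^sub>E S" using YZ by auto
    have r: "(restrict (\<lambda>k. if k \<in> I then fst YZ k else snd YZ k) I, restrict (\<lambda>k. if k \<in> I then fst YZ k else snd YZ k) J) = YZ"
      using YZ' disj by (auto simp: PiE_iff extensional_def restrict_def fun_eq_iff)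
    show "(restrict (\<lambda>k. if k \<in> I then fst YZ k else snd YZ k) I, restrict (\<lambda>k. if k \<in> I then fst YZ k else snd YZ k) J) = YZ"
      by (rule r)
    show "(\<lambda>k. if k \<in> I then fst YZ k else snd YZ k) \<in> (I \<union> J) \<rightarrow>\<^sub>E S"
      using YZ' by (auto simp: PiE_iff extensional_def)
    show "F (restrict (\<lambda>k. if k \<in> I then fst YZ k else snd YZ k) I) * G (restrict (\<lambda>k. if k \<in> I then fst YZ k else snd YZ k) J)
        = F (fst YZ) * G (snd YZ)"
      using r by (metis fst_conv snd_conv)
  qed
  finally show ?thesis by simp
qed



lemma tensor_functional:
  fixes f :: "nat \<Rightarrow> 'b \<Rightarrow> real"
  assumes finS: "finite S"
    and W: "\<And>j m. j < M \<Longrightarrow> m < M \<Longrightarrow> (\<Sum>x\<in>S. W j x * f m x) = (if m = j then 1 else 0)"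
    and e: "e \<in> {..<N} \<rightarrow>\<^sub>E {..<M}"
  shows "(\<Sum>X\<in>{..<N} \<rightarrow>\<^sub>E S. (\<Prod>i<N. W (e i) (X i)) * conv_func N M f A X) = A e"
proof -
  let ?P = "{..<N} \<rightarrow>\<^sub>E {..<M}"
  have "(\<Sum>X\<in>{..<N} \<rightarrow>\<^sub>E S. (\<Prod>i<N. W (e i) (X i)) * conv_func N M f A X)
      = (\<Sum>X\<in>{..<N} \<rightarrow>\<^sub>E S. \<Sum>d\<in>?P. A d * (\<Prod>i<N. W (e i) (X i) * f (d i) (X i)))"
    unfolding conv_func_def by (simp add: sum_distrib_left prod.distrib algebra_simps)
  also have "\<dots> = (\<Sum>d\<in>?P. A d * (\<Sum>X\<in>{..<N} \<rightarrow>\<^sub>E S. \<Prod>i<N. W (e i) (X i) * f (d i) (X i)))"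
    by (subst sum.swap) (simp add: sum_distrib_left)
  also have "\<dots> = (\<Sum>d\<in>?P. A d * (\<Prod>i<N. \<Sum>x\<in>S. W (e i) x * f (d i) x))"
    using finS by (simp add: prod_sum_PiE)
  also have "\<dots> = (\<Sum>d\<in>?P. A d * (if d = e then 1 else 0))"
  proof (rule sum.cong[OF refl])
    fix d assume d: "d \<in> ?P"
    have p: "(\<Prod>i<N. \<Sum>x\<in>S. W (e i) x * f (d i) x) = (\<Prod>i<N. if d i = e i then 1 else 0)"
      using d e by (intro prod.cong) (auto simp: W PiE_iff)
    show "A d * (\<Prod>i<N. \<Sum>x\<in>S. W (e i) x * f (d i) x) = A d * (if d = e then 1 else 0)"
    proof (cases "d = e")
      case True then show ?thesis using p by simp
    next
      case False
      then obtain i where "i < N" "d i \<noteq> e i" using d e PiE_ext by blast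
      then have "(\<Prod>i<N. if d i = e i then 1 else (0::real)) = 0"
        by (intro prod_zero) auto
      then show ?thesis using p False by simp
    qed
  qed
  also have "\<dots> = A e" using e by (simp add: if_distrib sum.delta finite_PiE cong: if_cong)
  finally show ?thesis .
qed

lemma conv_func_restrict: "conv_func N M f A (restrict X {..<N}) = conv_func N M f A X"
  unfolding conv_func_def by (intro sum.cong refl arg_cong2[where f="(*)"] prod.cong) auto


lemma lower_bound:
  fixes f :: "nat \<Rightarrow> 'b \<Rightarrow> real" and g g' :: "nat \<Rightarrow> (nat \<Rightarrow> 'b) \<Rightarrow> real"
  assumes linindep: "\<And>c :: nat \<Rightarrow> real. (\<forall>x. (\<Sum>m<M. c m * f m x) = 0) \<Longrightarrow> (\<forall>m<M. c m = 0)"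
    and part: "I \<union> J = {..<N}" "I \<inter> J = {}"
    and sep: "\<And>X. conv_func N M f A X = (\<Sum>\<nu><R. g \<nu> (restrict X I) * g' \<nu> (restrict X J))"
  shows "mat_rank (matricize N M A I J) \<le> R"
proof -
  obtain S W where finS: "finite S"
    and W: "\<And>j m. j < M \<Longrightarrow> m < M \<Longrightarrow> (\<Sum>x\<in>S. W j x * f m x) = (if m = j then 1 else 0)"
    using dual_common[OF linindep] by metis
  have fin: "finite I" "finite J" using part by (metis finite_Un finite_lessThan)+
  define \<alpha> where "\<alpha> \<nu> e = (\<Sum>Y\<in>I \<rightarrow>\<^sub>E S. (\<Prod>i\<in>I. W (e i) (Y i)) * g \<nu> Y)" for \<nu> e
  define \<beta> where "\<beta> \<nu> e = (\<Sum>Z\<in>J \<rightarrow>\<^sub>E S. (\<Prod>i\<in>J. W (e i) (Z i)) * g' \<nu> Z)" for \<nu> e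
  have Ae: "A e = (\<Sum>\<nu><R. \<alpha> \<nu> e * \<beta> \<nu> e)" if e: "e \<in> {..<N} \<rightarrow>\<^sub>E {..<M}" for e
  proof -
    have "A e = (\<Sum>X\<in>{..<N} \<rightarrow>\<^sub>E S. (\<Prod>i<N. W (e i) (X i)) * conv_func N M f A X)"
      using tensor_functional[OF finS W e] by simp
    also have "\<dots> = (\<Sum>X\<in>(I \<union> J) \<rightarrow>\<^sub>E S. \<Sum>\<nu><R.
        ((\<Prod>i\<in>I. W (e i) (restrict X I i)) * g \<nu> (restrict X I)) *
        ((\<Prod>i\<in>J. W (e i) (restrict X J i)) * g' \<nu> (restrict X J)))"
    proof (rule sum.cong)
      show "{..<N} \<rightarrow>\<^sub>E S = (I \<union> J) \<rightarrow>\<^sub>E S" using part by simp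
    next
      fix X assume "X \<in> (I \<union> J) \<rightarrow>\<^sub>E S"
      have p: "(\<Prod>i<N. W (e i) (X i)) = (\<Prod>i\<in>I. W (e i) (restrict X I i)) * (\<Prod>i\<in>J. W (e i) (restrict X J i))"
        using part fin by (simp add: prod.union_disjoint[symmetric])
      show "(\<Prod>i<N. W (e i) (X i)) * conv_func N M f A X = (\<Sum>\<nu><R.
        ((\<Prod>i\<in>I. W (e i) (restrict X I i)) * g \<nu> (restrict X I)) *
        ((\<Prod>i\<in>J. W (e i) (restrict X J i)) * g' \<nu> (restrict X J)))"
        unfolding p sep by (simp add: sum_distrib_left algebra_simps)
    qed
    also have "\<dots> = (\<Sum>\<nu><R. \<Sum>X\<in>(I \<union> J) \<rightarrow>\<^sub>E S.
        ((\<Prod>i\<in>I. W (e i) (restrict X I i)) * g \<nu> (restrict X I)) *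
        ((\<Prod>i\<in>J. W (e i) (restrict X J i)) * g' \<nu> (restrict X J)))"
      by (rule sum.swap)
    also have "\<dots> = (\<Sum>\<nu><R. \<alpha> \<nu> e * \<beta> \<nu> e)"
    proof (rule sum.cong[OF refl])
      fix \<nu>
      show "(\<Sum>X\<in>(I \<union> J) \<rightarrow>\<^sub>E S.
        ((\<Prod>i\<in>I. W (e i) (restrict X I i)) * g \<nu> (restrict X I)) *
        ((\<Prod>i\<in>J. W (e i) (restrict X J i)) * g' \<nu> (restrict X J))) = \<alpha> \<nu> e * \<beta> \<nu> e"
        unfolding \<alpha>_def \<beta>_def
        using sum_PiE_split[OF fin finS part(2), of "\<lambda>Y. (\<Prod>i\<in>I. W (e i) (Y i)) * g \<nu> Y"
            "\<lambda>Z. (\<Prod>i\<in>J. W (e i) (Z i)) * g' \<nu> Z"] by simp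
    qed
    finally show ?thesis .
  qed
  have \<alpha>_cong: "\<alpha> \<nu> e = \<alpha> \<nu> e'" if "\<And>i. i \<in> I \<Longrightarrow> e i = e' i" for \<nu> e e'
    unfolding \<alpha>_def using that by (intro sum.cong refl arg_cong2[where f="(*)"] prod.cong) auto
  have \<beta>_cong: "\<beta> \<nu> e = \<beta> \<nu> e'" if "\<And>i. i \<in> J \<Longrightarrow> e i = e' i" for \<nu> e e'
    unfolding \<beta>_def using that by (intro sum.cong refl arg_cong2[where f="(*)"] prod.cong) auto
  let ?D = "DD N M I J"
  let ?B = "matricize N M A I J"
  have IN: "\<And>i. i \<in> I \<Longrightarrow> i < N" "\<And>i. i \<in> J \<Longrightarrow> i < N" "\<And>i. i \<in> J \<Longrightarrow> i \<notin> I" using part by auto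
  have B: "?B \<in> carrier_mat (M ^ card I) (M ^ card J)" by (simp add: matricize_DD)
  have "vec_space.rank (M ^ card I) ?B \<le> R"
  proof (rule rank_le_sum[OF B])
    fix r c assume r: "r < M ^ card I" and c: "c < M ^ card J"
    have "?B $$ (r, c) = A (?D r c)" using r c by (simp add: matricize_DD)
    also have "\<dots> = (\<Sum>\<nu><R. \<alpha> \<nu> (?D r c) * \<beta> \<nu> (?D r c))" by (rule Ae[OF DD_PiE[OF part r c]])
    also have "\<dots> = (\<Sum>\<nu><R. \<alpha> \<nu> (?D r 0) * \<beta> \<nu> (?D 0 c))"
    proof (intro sum.cong refl arg_cong2[where f="(*)"])
      fix \<nu> show "\<alpha> \<nu> (?D r c) = \<alpha> \<nu> (?D r 0)" by (rule \<alpha>_cong) (simp add: DD_def IN)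
      show "\<beta> \<nu> (?D r c) = \<beta> \<nu> (?D 0 c)" by (rule \<beta>_cong) (simp add: DD_def IN)
    qed
    finally show "?B $$ (r, c) = (\<Sum>\<nu><R. (\<lambda>\<nu> r. \<alpha> \<nu> (?D r 0)) \<nu> r * (\<lambda>\<nu> c. \<beta> \<nu> (?D 0 c)) \<nu> c)" .
  qed
  then show ?thesis unfolding mat_rank_def using B by simp
qed


lemma digit_lt: "r < M ^ L \<Longrightarrow> 0 < L \<Longrightarrow> digit M L r t < M"
  unfolding digit_def by (metis gr0I less_nat_zero_code mod_less_divisor zero_power)

lemma upper_bound:
  fixes f :: "nat \<Rightarrow> 'a::euclidean_space \<Rightarrow> real"
  assumes meas: "\<And>m. m < M \<Longrightarrow> f m \<in> borel_measurable lborel"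
    and sqint: "\<And>m. m < M \<Longrightarrow> integrable lborel (\<lambda>x. (f m x)\<^sup>2)"
    and part: "I \<union> J = {..<N}" "I \<inter> J = {}"
  shows "\<exists>g g' :: nat \<Rightarrow> (nat \<Rightarrow> 'a) \<Rightarrow> real.
     (\<forall>\<nu><mat_rank (matricize N M A I J). sq_int_on I (g \<nu>) \<and> sq_int_on J (g' \<nu>)) \<and>
     (\<forall>X. conv_func N M f A X = (\<Sum>\<nu><mat_rank (matricize N M A I J). g \<nu> (restrict X I) * g' \<nu> (restrict X J)))"
proof -
  let ?a = "M ^ card I" and ?b = "M ^ card J"
  let ?B = "matricize N M A I J"
  let ?R = "mat_rank ?B"
  let ?D = "DD N M I J"
  have fin: "finite I" "finite J" using part by (metis finite_Un finite_lessThan)+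
  have IN: "\<And>i. i \<in> I \<Longrightarrow> i < N" "\<And>i. i \<in> J \<Longrightarrow> i < N" "\<And>i. i \<in> J \<Longrightarrow> i \<notin> I" using part by auto
  have B: "?B \<in> carrier_mat ?a ?b" by (simp add: matricize_DD)
  have R: "?R = vec_space.rank ?a ?B" unfolding mat_rank_def using B by simp
  obtain u v where uv: "\<And>r c. r < ?a \<Longrightarrow> c < ?b \<Longrightarrow> ?B $$ (r,c) = (\<Sum>\<nu><?R. u \<nu> r * v \<nu> c)"
    using rank_decomp[OF B] unfolding R by metis
  define \<rho> where "\<rho> r i = digit M (card I) r (pos_in I i)" for r i
  define \<sigma> where "\<sigma> c i = digit M (card J) c (pos_in J i)" for c i
  define \<Phi> where "\<Phi> r Y = (\<Prod>i\<in>I. f (\<rho> r i) (Y i))" for r and Y :: "nat \<Rightarrow> 'a"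
  define \<Psi> where "\<Psi> c Z = (\<Prod>i\<in>J. f (\<sigma> c i) (Z i))" for c and Z :: "nat \<Rightarrow> 'a"
  define g where "g \<nu> Y = (\<Sum>r<?a. u \<nu> r * \<Phi> r Y)" for \<nu> Y
  define g' where "g' \<nu> Z = (\<Sum>c<?b. v \<nu> c * \<Psi> c Z)" for \<nu> Z
  have sqg: "sq_int_on I (g \<nu>)" for \<nu>
    unfolding g_def
  proof (rule sq_int_sum)
    fix r assume r: "r < ?a"
    show "sq_int_on I (\<Phi> r)" unfolding \<Phi>_def
      by (rule sq_int_prod[OF fin(1) _ meas sqint])
         (use r fin in \<open>auto simp: \<rho>_def intro!: digit_lt simp: card_gt_0_iff\<close>)
  qed
  have sqg': "sq_int_on J (g' \<nu>)" for \<nu>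
    unfolding g'_def
  proof (rule sq_int_sum)
    fix c assume c: "c < ?b"
    show "sq_int_on J (\<Psi> c)" unfolding \<Psi>_def
      by (rule sq_int_prod[OF fin(2) _ meas sqint])
         (use c fin in \<open>auto simp: \<sigma>_def intro!: digit_lt simp: card_gt_0_iff\<close>)
  qed
  have eq: "conv_func N M f A X = (\<Sum>\<nu><?R. g \<nu> (restrict X I) * g' \<nu> (restrict X J))" for X
  proof -
    have "conv_func N M f A X = (\<Sum>rc\<in>{..<?a} \<times> {..<?b}. A (?D (fst rc) (snd rc)) * (\<Prod>i<N. f (?D (fst rc) (snd rc) i) (X i)))"
      unfolding conv_func_def
      using sum.reindex_bij_betw[OF DD_bij[OF part, of M], of "\<lambda>d. A d * (\<Prod>i<N. f (d i) (X i))"]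
      by (simp add: case_prod_beta)
    also have "\<dots> = (\<Sum>rc\<in>{..<?a} \<times> {..<?b}. ?B $$ (fst rc, snd rc) * \<Phi> (fst rc) (restrict X I) * \<Psi> (snd rc) (restrict X J))"
    proof (rule sum.cong[OF refl])
      fix rc assume rc: "rc \<in> {..<?a} \<times> {..<?b}"
      have p: "(\<Prod>i<N. f (?D (fst rc) (snd rc) i) (X i)) = \<Phi> (fst rc) (restrict X I) * \<Psi> (snd rc) (restrict X J)"
      proof -
        have "(\<Prod>i<N. f (?D (fst rc) (snd rc) i) (X i)) = (\<Prod>i\<in>I \<union> J. f (?D (fst rc) (snd rc) i) (X i))"
          using part by simp
        also have "\<dots> = (\<Prod>i\<in>I. f (?D (fst rc) (snd rc) i) (X i)) * (\<Prod>i\<in>J. f (?D (fst rc) (snd rc) i) (X i))"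
          by (rule prod.union_disjoint) (use fin part in auto)
        also have "\<dots> = \<Phi> (fst rc) (restrict X I) * \<Psi> (snd rc) (restrict X J)"
          unfolding \<Phi>_def \<Psi>_def
          by (intro arg_cong2[where f="(*)"] prod.cong refl) (auto simp: DD_def IN \<rho>_def \<sigma>_def)
        finally show ?thesis .
      qed
      show "A (?D (fst rc) (snd rc)) * (\<Prod>i<N. f (?D (fst rc) (snd rc) i) (X i)) =
            ?B $$ (fst rc, snd rc) * \<Phi> (fst rc) (restrict X I) * \<Psi> (snd rc) (restrict X J)"
        using rc unfolding p by (auto simp: matricize_DD)
    qed
    also have "\<dots> = (\<Sum>r<?a. \<Sum>c<?b. ?B $$ (r, c) * \<Phi> r (restrict X I) * \<Psi> c (restrict X J))"
      by (subst sum.cartesian_product) (simp add: case_prod_beta)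
    also have "\<dots> = (\<Sum>r<?a. \<Sum>c<?b. (\<Sum>\<nu><?R. u \<nu> r * v \<nu> c) * \<Phi> r (restrict X I) * \<Psi> c (restrict X J))"
      by (intro sum.cong refl) (simp add: uv)
    also have "\<dots> = (\<Sum>r<?a. \<Sum>c<?b. \<Sum>\<nu><?R. (u \<nu> r * \<Phi> r (restrict X I)) * (v \<nu> c * \<Psi> c (restrict X J)))"
      by (intro sum.cong refl) (simp add: sum_distrib_left sum_distrib_right mult_ac)
    also have "\<dots> = (\<Sum>r<?a. \<Sum>\<nu><?R. \<Sum>c<?b. (u \<nu> r * \<Phi> r (restrict X I)) * (v \<nu> c * \<Psi> c (restrict X J)))"
      by (intro sum.cong refl sum.swap)
    also have "\<dots> = (\<Sum>\<nu><?R. \<Sum>r<?a. \<Sum>c<?b. (u \<nu> r * \<Phi> r (restrict X I)) * (v \<nu> c * \<Psi> c (restrict X J)))"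
      by (rule sum.swap)
    also have "\<dots> = (\<Sum>\<nu><?R. g \<nu> (restrict X I) * g' \<nu> (restrict X J))"
      unfolding g_def g'_def by (simp add: sum_product)
    finally show ?thesis .
  qed
  show ?thesis using sqg sqg' eq by blast
qed


theorem claim1:
  fixes N M :: nat
    and f :: "nat \<Rightarrow> 'a::euclidean_space \<Rightarrow> real"
    and A :: "(nat \<Rightarrow> nat) \<Rightarrow> real"
    and I J :: "nat set"
  assumes meas: "\<And>m. m < M \<Longrightarrow> f m \<in> borel_measurable lborel"
    and sqint: "\<And>m. m < M \<Longrightarrow> integrable lborel (\<lambda>x. (f m x)\<^sup>2)"
    and linindep: "\<And>c :: nat \<Rightarrow> real.
                     (\<forall>x. (\<Sum>m<M. c m * f m x) = 0) \<Longrightarrow> (\<forall>m<M. c m = 0)"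
    and part: "I \<union> J = {..<N}" "I \<inter> J = {}"
  shows "sep_rank (conv_func N M f A) I J = mat_rank (matricize N M A I J)"
proof -
  let ?h = "conv_func N M f A"
  let ?rk = "mat_rank (matricize N M A I J)"
  obtain g0 g0' :: "nat \<Rightarrow> (nat \<Rightarrow> 'a) \<Rightarrow> real" where
    g0: "\<forall>\<nu><?rk. sq_int_on I (g0 \<nu>) \<and> sq_int_on J (g0' \<nu>)"
    and eq0: "\<forall>X. ?h X = (\<Sum>\<nu><?rk. g0 \<nu> (restrict X I) * g0' \<nu> (restrict X J))"
    using upper_bound[where f=f and M=M and I=I and J=J and N=N, OF meas sqint part, where A=A] by blast
  show ?thesis
  proof (cases "I = {} \<or> J = {}")
    case IJ: True
    have sr: "sep_rank ?h I J = (if \<forall>X. ?h X = 0 then 0 else 1)" using IJ by (simp add: sep_rank_def)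
    show ?thesis
    proof (cases "\<forall>X. ?h X = 0")
      case h0: True
      have "?rk \<le> 0"
      proof (rule lower_bound[where f=f and M=M and N=N and I=I and J=J and A=A and R=0 and g="\<lambda>_ _. 0" and g'="\<lambda>_ _. 0", OF linindep part])
        fix X :: "nat \<Rightarrow> 'a"
        show "?h X = (\<Sum>\<nu><(0::nat). (\<lambda>_ _. 0::real) \<nu> (restrict X I) * (\<lambda>_ _. 0::real) \<nu> (restrict X J))"
          using h0 by simp
      qed
      then show ?thesis using sr h0 by simp
    next
      case False
      have le1: "?rk \<le> 1"
      proof (cases "J = {}")
        case True
        then have IN: "I = {..<N}" using part by simp
        show ?thesis
        proof (rule lower_bound[where f=f and M=M and N=N and I=I and J=J and A=A and R=1 and g="\<lambda>_. ?h" and g'="\<lambda>_ _. 1", OF linindep part])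
          fix X :: "nat \<Rightarrow> 'a"
          show "?h X = (\<Sum>\<nu><(1::nat). (\<lambda>_. ?h) \<nu> (restrict X I) * (\<lambda>_ _. 1::real) \<nu> (restrict X J))"
            using conv_func_restrict[of N M f A X] by (simp add: IN)
        qed
      next
        case False
        then have IN: "J = {..<N}" "I = {}" using part IJ by auto
        show ?thesis
        proof (rule lower_bound[where f=f and M=M and N=N and I=I and J=J and A=A and R=1 and g="\<lambda>_ _. 1" and g'="\<lambda>_. ?h", OF linindep part])
          fix X :: "nat \<Rightarrow> 'a"
          show "?h X = (\<Sum>\<nu><(1::nat). (\<lambda>_ _. 1::real) \<nu> (restrict X I) * (\<lambda>_. ?h) \<nu> (restrict X J))"
            using conv_func_restrict[of N M f A X] by (simp add: IN)
        qed
      qed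
      have "?rk \<noteq> 0"
      proof
        assume "?rk = 0"
        then have "\<forall>X. ?h X = 0" using eq0 by simp
        then show False using False by blast
      qed
      then show ?thesis using sr False le1 by simp
    qed
  next
    case False
    then have sr: "sep_rank ?h I J = (LEAST R. \<exists>g g' :: nat \<Rightarrow> (nat \<Rightarrow> 'a) \<Rightarrow> real.
              (\<forall>\<nu><R. sq_int_on I (g \<nu>) \<and> sq_int_on J (g' \<nu>)) \<and>
              (\<forall>X. ?h X = (\<Sum>\<nu><R. g \<nu> (restrict X I) * g' \<nu> (restrict X J))))"
      by (simp add: sep_rank_def)
    show ?thesis unfolding sr
    proof (rule Least_equality)
      show "\<exists>g g' :: nat \<Rightarrow> (nat \<Rightarrow> 'a) \<Rightarrow> real.
              (\<forall>\<nu><?rk. sq_int_on I (g \<nu>) \<and> sq_int_on J (g' \<nu>)) \<and>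
              (\<forall>X. ?h X = (\<Sum>\<nu><?rk. g \<nu> (restrict X I) * g' \<nu> (restrict X J)))"
        using g0 eq0 by blast
    next
      fix R assume "\<exists>g g' :: nat \<Rightarrow> (nat \<Rightarrow> 'a) \<Rightarrow> real.
              (\<forall>\<nu><R. sq_int_on I (g \<nu>) \<and> sq_int_on J (g' \<nu>)) \<and>
              (\<forall>X. ?h X = (\<Sum>\<nu><R. g \<nu> (restrict X I) * g' \<nu> (restrict X J)))"
      then obtain g g' :: "nat \<Rightarrow> (nat \<Rightarrow> 'a) \<Rightarrow> real" where
        gg: "\<forall>X. ?h X = (\<Sum>\<nu><R. g \<nu> (restrict X I) * g' \<nu> (restrict X J))" by blast
      show "?rk \<le> R"
      proof (rule lower_bound[where f=f and M=M and N=N and I=I and J=J and A=A and R=R and g=g and g'=g', OF linindep part])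
        fix X :: "nat \<Rightarrow> 'a"
        show "?h X = (\<Sum>\<nu><R. g \<nu> (restrict X I) * g' \<nu> (restrict X J))" using gg by blast
      qed
    qed
  qed
qed

end
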